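(* Let $M,N,K\ge 1$ be integers, $\mathcal K=\{1,\dots,K\}$, $\mathbf G\in\mathbb C^{N\times M}$, $\mathbf h_1,\dots,\mathbf h_K\in\mathbb C^{M}$, $P_0>0$, and for each $k\in\mathcal K$ let $\Gamma_k>0$ and $\sigma_k^2>0$. Write $\mathbf H_k=\mathbf h_k\mathbf h_k^H$. For a positive semidefinite $\mathbf R\in\mathbb C^{M\times M}$ let $f(\mathbf R)=\mathrm{tr}\big((\mathbf G\mathbf R\mathbf G^H)^{-1}\big)$ when $\mathbf G\mathbf R\mathbf G^H$ is invertible, and $f(\mathbf R)=+\infty$ otherwise. Consider the problems: (P2.1): minimize $f\big(\sum_{k\in\mathcal K}\mathbf w_k\mathbf w_k^H+\mathbf R_0\big)$ over $\mathbf w_1,\dots,\mathbf w_K\in\mathbb C^M$ and Hermitian $\mathbf R_0\in\mathbb C^{M\times M}$, subject to $\frac{|\mathbf h_k^H\mathbf w_k|^2}{\sum_{i\in\mathcal K,i\ne k}|\mathbf h_k^H\mathbf w_i|^2+\sigma_k^2}\ge\Gamma_k$ for all $k\in\mathcal K$, $\sum_{k\in\mathcal K}\|\mathbf w_k\|^2+\mathrm{tr}(\mathbf R_0)\le P_0$, and $\mathbf R_0\succeq\mathbf 0$; (SDR2.1): minimize $f\big(\sum_{k\in\mathcal K}\mathbf W_k+\mathbf R_0\big)$ over Hermitian $\mathbf W_1,\dots,\mathbf W_K,\mathbf R_0\in\mathbb C^{M\times M}$, subject to $\frac{1}{\Gamma_k}\mathrm{tr}(\mathbf H_k\mathbf W_k)-\sum_{i\in\mathcal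 K,i\ne k}\mathrm{tr}(\mathbf H_k\mathbf W_i)\ge\sigma_k^2$ for all $k\in\mathcal K$, $\sum_{k\in\mathcal K}\mathrm{tr}(\mathbf W_k)+\mathrm{tr}(\mathbf R_0)\le P_0$, $\mathbf R_0\succeq\mathbf 0$, and $\mathbf W_k\succeq\mathbf 0$ for all $k\in\mathcal K$. Then (P2.1) and (SDR2.1) have the same optimal value. Moreover, if $\{\bar{\mathbf W}_k\}_{k\in\mathcal K},\bar{\mathbf R}_0$ is an optimal solution of (SDR2.1), then $\mathbf w_k^{\star\star}=(\mathbf h_k^H\bar{\mathbf W}_k\mathbf h_k)^{-1/2}\bar{\mathbf W}_k\mathbf h_k$ for $k\in\mathcal K$ and $\mathbf R_0^{\star\star}=\bar{\mathbf R}_0+\sum_{k\in\mathcal K}\bar{\mathbf W}_k-\sum_{k\in\mathcal K}\mathbf w_k^{\star\star}(\mathbf w_k^{\star\star})^H$ form an optimal solution of (P2.1).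
   Context: This is the transmit beamforming subproblem of an IRS-enabled integrated sensing and communication system with a fixed IRS reflection vector, for users able to pre-cancel the sensing-signal interference: $\mathbf h_k$ is the combined channel from the base station to user $k$, $\mathbf w_k$ the information beamformer, $\mathbf R_0$ the sensing-signal covariance, $\mathbf G$ the base-station-to-IRS channel, $\Gamma_k$ the SINR threshold, $\sigma_k^2$ the noise variance, $P_0$ the power budget. The objective is (up to a positive constant) the Cramér-Rao bound for estimating the target response matrix. *)

theory Defs
  imports "HOL-Analysis.Analysis"
begin

text \<open>Complex matrices are rendered as complex ^'c ^'r (rows 'r, columns 'c);
 dimensions M, N, K are the cardinalities of finite index types.\<close>

definition ctrans :: "complex ^'c ^'r \<Rightarrow> complex ^'r ^'c" where
  "ctrans A = (\<chi> i j. cnj (A $ j $ i))"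

definition mtrace :: "complex ^'n ^'n \<Rightarrow> complex" where
  "mtrace A = (\<Sum>i\<in>UNIV. A $ i $ i)"

definition hermitian :: "complex ^'n ^'n \<Rightarrow> bool" where
  "hermitian A \<longleftrightarrow> ctrans A = A"

definition cinner :: "complex ^'n \<Rightarrow> complex ^'n \<Rightarrow> complex" where
  "cinner h w = (\<Sum>i\<in>UNIV. cnj (h $ i) * w $ i)"

definition outer :: "complex ^'n \<Rightarrow> complex ^'n \<Rightarrow> complex ^'n ^'n" where
  "outer u v = (\<chi> i j. u $ i * cnj (v $ j))"

definition psd :: "complex ^'n ^'n \<Rightarrow> bool" where
  "psd A \<longleftrightarrow> hermitian A \<and> (\<forall>x. Re (cinner x (A *v x)) \<ge> 0)"

definition crb :: "complex ^'m ^'n \<Rightarrow> complex ^'m ^'m \<Rightarrow> ereal" where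
  "crb G R = (if invertible (G ** R ** ctrans G)
              then ereal (Re (mtrace (matrix_inv (G ** R ** ctrans G)))) else \<infinity>)"

definition feasP :: "('k::finite \<Rightarrow> complex ^'m) \<Rightarrow> ('k \<Rightarrow> real) \<Rightarrow> ('k \<Rightarrow> real) \<Rightarrow> real
   \<Rightarrow> ('k \<Rightarrow> complex ^'m) \<Rightarrow> complex ^'m ^'m \<Rightarrow> bool" where
  "feasP h Gam sigma2 P0 w R0 \<longleftrightarrow>
     (\<forall>k. (cmod (cinner (h k) (w k)))\<^sup>2 /
           ((\<Sum>i\<in>UNIV - {k}. (cmod (cinner (h k) (w i)))\<^sup>2) + sigma2 k) \<ge> Gam k) \<and>
     (\<Sum>k\<in>UNIV. (norm (w k))\<^sup>2) + Re (mtrace R0) \<le> P0 \<and>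
     hermitian R0 \<and> psd R0"

definition objP :: "complex ^'m ^'n \<Rightarrow> ('k::finite \<Rightarrow> complex ^'m) \<Rightarrow> complex ^'m ^'m \<Rightarrow> ereal" where
  "objP G w R0 = crb G ((\<Sum>k\<in>UNIV. outer (w k) (w k)) + R0)"

definition feasS :: "('k::finite \<Rightarrow> complex ^'m) \<Rightarrow> ('k \<Rightarrow> real) \<Rightarrow> ('k \<Rightarrow> real) \<Rightarrow> real
   \<Rightarrow> ('k \<Rightarrow> complex ^'m ^'m) \<Rightarrow> complex ^'m ^'m \<Rightarrow> bool" where
  "feasS h Gam sigma2 P0 W R0 \<longleftrightarrow>
     (\<forall>k. hermitian (W k)) \<and> hermitian R0 \<and>
     (\<forall>k. Re (mtrace (outer (h k) (h k) ** W k)) / Gam k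
          - (\<Sum>i\<in>UNIV - {k}. Re (mtrace (outer (h k) (h k) ** W i))) \<ge> sigma2 k) \<and>
     (\<Sum>k\<in>UNIV. Re (mtrace (W k))) + Re (mtrace R0) \<le> P0 \<and>
     psd R0 \<and> (\<forall>k. psd (W k))"

definition objS :: "complex ^'m ^'n \<Rightarrow> ('k::finite \<Rightarrow> complex ^'m ^'m) \<Rightarrow> complex ^'m ^'m \<Rightarrow> ereal" where
  "objS G W R0 = crb G ((\<Sum>k\<in>UNIV. W k) + R0)"

end

theory Submission
  imports Defs
begin

lemma cinner_add_right: "cinner x (y + z) = cinner x y + cinner x z"
  by (simp add: cinner_def algebra_simps sum.distrib)
lemma cinner_diff_right: "cinner x (y - z) = cinner x y - cinner x z"
  by (simp add: cinner_def algebra_simps sum_subtractf)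
lemma cinner_scale_right: "cinner x (c *s y) = c * cinner x y"
  by (simp add: cinner_def algebra_simps sum_distrib_left)
lemma cinner_add_left: "cinner (x + y) z = cinner x z + cinner y z"
  by (simp add: cinner_def algebra_simps sum.distrib)
lemma cinner_diff_left: "cinner (x - y) z = cinner x z - cinner y z"
  by (simp add: cinner_def algebra_simps sum_subtractf)
lemma cinner_scale_left: "cinner (c *s x) y = cnj c * cinner x y"
  by (simp add: cinner_def algebra_simps sum_distrib_left)
lemma cinner_sum_right: "cinner x (\<Sum>k\<in>S. f k) = (\<Sum>k\<in>S. cinner x (f k))"
  by (simp add: cinner_def sum_component sum_distrib_left sum.swap[of _ S])
lemma cinner_swap: "cinner y x = cnj (cinner x y)"
  by (simp add: cinner_def mult.commute)

lemma mv_add: "(A + B) *v x = A *v x + B *v (x::complex^'n)"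
  by (simp add: matrix_vector_mult_def vec_eq_iff algebra_simps sum.distrib)
lemma mv_diff: "(A - B) *v x = A *v x - B *v (x::complex^'n)"
  by (simp add: matrix_vector_mult_def vec_eq_iff left_diff_distrib sum_subtractf)
lemma mv_sum: "(\<Sum>k\<in>S. A k) *v x = (\<Sum>k\<in>S. A k *v (x::complex^'n))"
  by (simp add: matrix_vector_mult_def vec_eq_iff sum_component sum_distrib_right sum.swap[of _ S])
lemma mv_addr: "A *v (x + y) = A *v x + A *v (y::complex^'n)"
  by (simp add: matrix_vector_mult_def vec_eq_iff algebra_simps sum.distrib)
lemma mv_diffr: "A *v (x - y) = A *v x - A *v (y::complex^'n)"
  by (simp add: matrix_vector_mult_def vec_eq_iff right_diff_distrib sum_subtractf)
lemma mv_scale: "A *v (c *s x) = c *s (A *v (x::complex^'n))"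
  by (simp add: matrix_vector_mult_def vec_eq_iff sum_distrib_left mult.left_commute)
lemma outer_mv: "outer u v *v x = cinner v x *s u"
  by (simp add: outer_def cinner_def matrix_vector_mult_def vec_eq_iff sum_distrib_left algebra_simps)

lemma mtrace_add: "mtrace (A + B) = mtrace A + mtrace B"
  by (simp add: mtrace_def sum.distrib)
lemma mtrace_diff: "mtrace (A - B) = mtrace A - mtrace B"
  by (simp add: mtrace_def sum_subtractf)
lemma mtrace_sum: "mtrace (\<Sum>k\<in>S. A k) = (\<Sum>k\<in>S. mtrace (A k))"
  by (simp add: mtrace_def sum_component sum.swap[of _ S])
lemma trace_outer_mult: "mtrace (outer h h ** W) = cinner h (W *v h)"
proof -
  have "mtrace (outer h h ** W) = (\<Sum>i\<in>UNIV. \<Sum>j\<in>UNIV. h$i * cnj (h$j) * W$j$i)"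
    by (simp add: mtrace_def outer_def matrix_matrix_mult_def)
  also have "\<dots> = (\<Sum>j\<in>UNIV. \<Sum>i\<in>UNIV. cnj (h$j) * (W$j$i * h$i))"
    by (subst sum.swap) (simp add: mult_ac)
  also have "\<dots> = cinner h (W *v h)"
    by (simp add: cinner_def matrix_vector_mult_def sum_distrib_left)
  finally show ?thesis .
qed

lemma pw: "cnj z * z = complex_of_real ((cmod z)\<^sup>2)"
  by (metis complex_norm_square mult.commute)
lemma cinner_self: "cinner x x = complex_of_real ((norm x)\<^sup>2)"
proof -
  have n: "(norm x)\<^sup>2 = (\<Sum>i\<in>UNIV. (cmod (x $ i))\<^sup>2)"
    by (simp add: norm_vec_def L2_set_def sum_nonneg)
  have "cinner x x = (\<Sum>i\<in>UNIV. complex_of_real ((cmod (x$i))\<^sup>2))"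
    by (simp only: cinner_def pw)
  also have "\<dots> = complex_of_real (\<Sum>i\<in>UNIV. (cmod (x$i))\<^sup>2)" by (simp only: of_real_sum)
  finally show ?thesis using n by simp
qed
lemma trace_outer: "mtrace (outer w w) = complex_of_real ((norm w)\<^sup>2)"
  using cinner_self[of w] by (simp add: mtrace_def outer_def cinner_def mult.commute)

lemma herm_add: "hermitian A \<Longrightarrow> hermitian B \<Longrightarrow> hermitian (A + B)"
  by (simp add: hermitian_def ctrans_def vec_eq_iff)
lemma herm_diff: "hermitian A \<Longrightarrow> hermitian B \<Longrightarrow> hermitian (A - B)"
  by (simp add: hermitian_def ctrans_def vec_eq_iff)
lemma herm_sum: "(\<And>k. k \<in> S \<Longrightarrow> hermitian (A k)) \<Longrightarrow> hermitian (\<Sum>k\<in>S. A k)"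
  by (induction S rule: infinite_finite_induct)
     (auto simp: herm_add, simp_all add: hermitian_def ctrans_def vec_eq_iff)
lemma herm_outer: "hermitian (outer w w)"
  by (simp add: hermitian_def ctrans_def outer_def vec_eq_iff mult.commute)

lemma herm_swap: "hermitian A \<Longrightarrow> cinner y (A *v x) = cnj (cinner x (A *v y))"
proof -
  assume hA: "hermitian A"
  have a: "cnj (A $ j $ i) = A $ i $ j" for i j
  proof -
    have "ctrans A $ i $ j = A $ i $ j" using hA unfolding hermitian_def by simp
    then show ?thesis unfolding ctrans_def by simp
  qed
  have "cnj (cinner x (A *v y)) = (\<Sum>j\<in>UNIV. \<Sum>i\<in>UNIV. x $ j * cnj (A $ j $ i) * cnj (y $ i))"
    by (simp add: cinner_def matrix_vector_mult_def sum_distrib_left mult_ac)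
  also have "\<dots> = (\<Sum>i\<in>UNIV. \<Sum>j\<in>UNIV. cnj (y $ i) * (A $ i $ j * x $ j))"
    by (subst sum.swap) (simp add: a mult_ac)
  also have "\<dots> = cinner y (A *v x)"
    by (simp add: cinner_def matrix_vector_mult_def sum_distrib_left)
  finally show ?thesis by simp
qed

lemma real_of_cnj: "cnj z = z \<Longrightarrow> z = complex_of_real (Re z)"
proof -
  assume h: "cnj z = z"
  then have "Im z = 0" by (simp add: complex_eq_iff)
  then show ?thesis by (simp add: complex_eq_iff)
qed
lemma herm_real: "hermitian A \<Longrightarrow> cinner x (A *v x) = complex_of_real (Re (cinner x (A *v x)))"
  by (metis herm_swap real_of_cnj)

lemma psd_add: "psd A \<Longrightarrow> psd B \<Longrightarrow> psd (A + B)"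
  by (auto simp: psd_def herm_add mv_add cinner_add_right intro: add_nonneg_nonneg)
lemma psd_outer: "psd (outer w w)"
proof -
  have "cinner x (outer w w *v x) = complex_of_real ((cmod (cinner x w))\<^sup>2)" for x
    using cinner_swap[of x w] by (simp add: outer_mv cinner_scale_right complex_mult_cnj cmod_power2 del: of_real_power)
  then show ?thesis by (simp add: psd_def herm_outer)
qed

lemma cs:
  assumes "psd A" and b: "Re (cinner y (A *v y)) > 0"
  shows "(cmod (cinner x (A *v y)))\<^sup>2 / Re (cinner y (A *v y)) \<le> Re (cinner x (A *v x))"
proof -
  have H: "hermitian A" using assms by (simp add: psd_def)
  define bb where "bb = Re (cinner y (A *v y))"
  define p where "p = cinner x (A *v y)"
  define c where "c = cnj p / complex_of_real bb"
  have bb0: "bb > 0" using b bb_def by simp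
  have yx: "cinner y (A *v x) = cnj p" unfolding p_def by (rule herm_swap[OF H])
  have yy: "cinner y (A *v y) = complex_of_real bb" unfolding bb_def by (rule herm_real[OF H])
  have e: "cinner (x - c *s y) (A *v (x - c *s y)) =
      cinner x (A *v x) - (c * p + cnj c * cnj p - cnj c * c * complex_of_real bb)"
    unfolding mv_diffr mv_scale cinner_diff_left cinner_diff_right cinner_scale_left
        cinner_scale_right yx yy p_def[symmetric]
    by (simp add: algebra_simps)
  have t1: "c * p = complex_of_real ((cmod p)\<^sup>2 / bb)"
  proof -
    have "c * p = (cnj p * p) / complex_of_real bb" by (simp add: c_def)
    also have "\<dots> = complex_of_real ((cmod p)\<^sup>2) / complex_of_real bb" by (simp only: pw)
    finally show ?thesis by simp
  qed
  have t2: "cnj c * cnj p = complex_of_real ((cmod p)\<^sup>2 / bb)"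
  proof -
    have "cnj c * cnj p = cnj (c * p)" by simp
    then show ?thesis using t1 by simp
  qed
  have t3: "cnj c * c * complex_of_real bb = complex_of_real ((cmod p)\<^sup>2 / bb)"
  proof -
    have "cnj c * c * complex_of_real bb = complex_of_real ((cmod c)\<^sup>2 * bb)" by (simp add: pw)
    moreover have "cmod c = cmod p / bb" using bb0 by (simp add: c_def norm_divide)
    moreover have "(cmod p / bb)\<^sup>2 * bb = (cmod p)\<^sup>2 / bb" using bb0 by (simp add: power2_eq_square)
    ultimately show ?thesis by simp
  qed
  have "0 \<le> Re (cinner (x - c *s y) (A *v (x - c *s y)))" using assms(1) by (simp add: psd_def)
  then have "0 \<le> Re (cinner x (A *v x)) - (cmod p)\<^sup>2 / bb"
    unfolding e t1 t2 t3 by simp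
  then show ?thesis unfolding bb_def[symmetric] p_def[symmetric] by linarith
qed

lemma psd_zero: "psd (0::complex^'n^'n)"
  by (simp add: psd_def hermitian_def ctrans_def cinner_def vec_eq_iff matrix_vector_mult_def)

lemma psd_sum: "(\<And>k. k \<in> S \<Longrightarrow> psd (A k)) \<Longrightarrow> psd (\<Sum>k\<in>S. A k)"
  by (induction S rule: infinite_finite_induct) (auto simp: psd_zero psd_add)

lemma quad_outer: "cinner x (outer w w *v x) = complex_of_real ((cmod (cinner x w))\<^sup>2)"
proof -
  have "cinner x (outer w w *v x) = cnj (cinner x w) * cinner x w"
    using cinner_swap[of w x] by (simp add: outer_mv cinner_scale_right)
  then show ?thesis by (simp only: pw)
qed

lemma scaled_inner:
  assumes "b > 0"
  shows "(cmod (cinner x (complex_of_real (1 / sqrt b) *s v)))\<^sup>2 = (cmod (cinner x v))\<^sup>2 / b"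
proof -
  have "(cmod (cinner x (complex_of_real (1 / sqrt b) *s v)))\<^sup>2 = (1 / sqrt b)\<^sup>2 * (cmod (cinner x v))\<^sup>2"
    using assms by (simp add: cinner_scale_right norm_divide power_divide)
  also have "(1 / sqrt b)\<^sup>2 = 1 / b" using assms by (simp add: power_divide)
  finally show ?thesis by simp
qed

lemma psd_Wminus:
  assumes "psd W" and b: "Re (cinner h (W *v h)) > 0"
  shows "psd (W - outer (complex_of_real (1 / sqrt (Re (cinner h (W *v h)))) *s (W *v h))
                         (complex_of_real (1 / sqrt (Re (cinner h (W *v h)))) *s (W *v h)))"
    (is "psd (W - outer ?w ?w)")
proof -
  have hW: "hermitian W" using assms by (simp add: psd_def)
  have "Re (cinner x ((W - outer ?w ?w) *v x)) \<ge> 0" for x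
  proof -
    have "Re (cinner x ((W - outer ?w ?w) *v x)) = Re (cinner x (W *v x)) - (cmod (cinner x ?w))\<^sup>2"
      by (simp add: mv_diff cinner_diff_right quad_outer)
    also have "(cmod (cinner x ?w))\<^sup>2 = (cmod (cinner x (W *v h)))\<^sup>2 / Re (cinner h (W *v h))"
      using b by (rule scaled_inner)
    finally show ?thesis using cs[OF assms(1) b, of x] by simp
  qed
  then show ?thesis by (simp add: psd_def herm_diff hW herm_outer)
qed

lemma psd_quad_nonneg: "psd A \<Longrightarrow> Re (cinner x (A *v x)) \<ge> 0"
  by (simp add: psd_def)


lemma Re_trace_outer: "Re (mtrace (outer w w)) = (norm w)\<^sup>2"
  by (simp add: trace_outer)

lemma Re_trace_HW: "Re (mtrace (outer h h ** W)) = Re (cinner h (W *v h))"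
  by (simp add: trace_outer_mult)

lemma embed:
  fixes h :: "'k::finite \<Rightarrow> complex ^'m"
  assumes Gp: "\<And>k. Gam k > 0" and sp: "\<And>k. sigma2 k > 0"
    and F: "feasP h Gam sigma2 P0 w R0"
  shows "feasS h Gam sigma2 P0 (\<lambda>k. outer (w k) (w k)) R0
         \<and> objS G (\<lambda>k. outer (w k) (w k)) R0 = objP G w R0"
proof -
  have q: "Re (mtrace (outer (h k) (h k) ** outer (w i) (w i))) = (cmod (cinner (h k) (w i)))\<^sup>2" for k i
    by (simp add: Re_trace_HW quad_outer)
  have sinr: "Re (mtrace (outer (h k) (h k) ** outer (w k) (w k))) / Gam k
          - (\<Sum>i\<in>UNIV - {k}. Re (mtrace (outer (h k) (h k) ** outer (w i) (w i)))) \<ge> sigma2 k" for k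
  proof -
    define D where "D = (\<Sum>i\<in>UNIV - {k}. (cmod (cinner (h k) (w i)))\<^sup>2) + sigma2 k"
    have D0: "D > 0" unfolding D_def using sp[of k] by (simp add: add_nonneg_pos sum_nonneg)
    have "(cmod (cinner (h k) (w k)))\<^sup>2 / D \<ge> Gam k" using F unfolding feasP_def D_def by blast
    then have "Gam k * D \<le> (cmod (cinner (h k) (w k)))\<^sup>2" using D0 by (simp add: le_divide_eq mult.commute)
    then have "D \<le> (cmod (cinner (h k) (w k)))\<^sup>2 / Gam k" using Gp[of k] by (simp add: le_divide_eq mult.commute)
    then show ?thesis unfolding q D_def by simp
  qed
  have pw2: "(\<Sum>k\<in>UNIV. Re (mtrace (outer (w k) (w k)))) + Re (mtrace R0) \<le> P0"
    using F unfolding feasP_def by (simp add: Re_trace_outer)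
  have "feasS h Gam sigma2 P0 (\<lambda>k. outer (w k) (w k)) R0"
    unfolding feasS_def using F sinr pw2 by (simp add: herm_outer psd_outer feasP_def)
  moreover have "objS G (\<lambda>k. outer (w k) (w k)) R0 = objP G w R0"
    by (simp add: objS_def objP_def)
  ultimately show ?thesis by blast
qed


lemma construct:
  fixes h :: "'k::finite \<Rightarrow> complex ^'m" and G :: "complex ^'m ^'n"
  assumes Gp: "\<And>k. Gam k > 0" and sp: "\<And>k. sigma2 k > 0"
    and F: "feasS h Gam sigma2 P0 Wb Rb"
  assumes ws_def: "ws = (\<lambda>k. complex_of_real (1 / sqrt (Re (cinner (h k) (Wb k *v h k)))) *s (Wb k *v h k))"
    and Rs_def: "Rs = Rb + (\<Sum>k\<in>UNIV. Wb k) - (\<Sum>k\<in>UNIV. outer (ws k) (ws k))"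
  shows "feasP h Gam sigma2 P0 ws Rs \<and> objP G ws Rs = objS G Wb Rb"
proof -
  define b where "b k = Re (cinner (h k) (Wb k *v h k))" for k
  have psdW: "psd (Wb k)" for k using F by (simp add: feasS_def)
  have hW: "hermitian (Wb k)" for k using F by (simp add: feasS_def)
  have psdR: "psd Rb" and hR: "hermitian Rb" using F by (simp_all add: feasS_def)
  have cons: "b k / Gam k - (\<Sum>i\<in>UNIV - {k}. Re (cinner (h k) (Wb i *v h k))) \<ge> sigma2 k" for k
    using F unfolding feasS_def b_def Re_trace_HW by blast
  have nn: "(\<Sum>i\<in>UNIV - {k}. Re (cinner (h k) (Wb i *v h k))) \<ge> 0" for k
    by (rule sum_nonneg) (simp add: psd_quad_nonneg[OF psdW])
  have bGam: "b k / Gam k > 0" for k using cons[of k] nn[of k] sp[of k] by linarith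
  have bpos: "b k > 0" for k using bGam[of k] Gp[of k] by (simp add: zero_less_divide_iff)
  have ws_eq: "ws k = complex_of_real (1 / sqrt (b k)) *s (Wb k *v h k)" for k
    by (simp add: ws_def b_def)
  have hk: "cinner (h k) (Wb k *v h k) = complex_of_real (b k)" for k
    unfolding b_def by (rule herm_real[OF hW])
  have sig: "(cmod (cinner (h k) (ws k)))\<^sup>2 = b k" for k
  proof -
    have "(cmod (cinner (h k) (ws k)))\<^sup>2 = (cmod (cinner (h k) (Wb k *v h k)))\<^sup>2 / b k"
      unfolding ws_eq by (rule scaled_inner[OF bpos])
    also have "\<dots> = b k" using bpos[of k] by (simp add: hk power2_eq_square)
    finally show ?thesis .
  qed
  have intf: "(cmod (cinner (h k) (ws i)))\<^sup>2 \<le> Re (cinner (h k) (Wb i *v h k))" for k i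
  proof -
    have "(cmod (cinner (h k) (ws i)))\<^sup>2 = (cmod (cinner (h k) (Wb i *v h i)))\<^sup>2 / b i"
      unfolding ws_eq by (rule scaled_inner[OF bpos])
    also have "\<dots> \<le> Re (cinner (h k) (Wb i *v h k))"
      using cs[where A="Wb i" and y="h i" and x="h k", OF psdW] bpos[of i] by (simp add: b_def)
    finally show ?thesis .
  qed
  have sinr: "(cmod (cinner (h k) (ws k)))\<^sup>2 /
           ((\<Sum>i\<in>UNIV - {k}. (cmod (cinner (h k) (ws i)))\<^sup>2) + sigma2 k) \<ge> Gam k" for k
  proof -
    define D where "D = (\<Sum>i\<in>UNIV - {k}. (cmod (cinner (h k) (ws i)))\<^sup>2) + sigma2 k"
    have D0: "D > 0" unfolding D_def using sp[of k] by (simp add: add_nonneg_pos sum_nonneg)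
    have "D \<le> (\<Sum>i\<in>UNIV - {k}. Re (cinner (h k) (Wb i *v h k))) + sigma2 k"
      unfolding D_def by (simp add: sum_mono intf)
    also have "\<dots> \<le> b k / Gam k" using cons[of k] by linarith
    finally have "D \<le> b k / Gam k" .
    then have "Gam k * D \<le> b k" using Gp[of k] by (simp add: le_divide_eq mult.commute)
    then have "Gam k \<le> b k / D" using D0 by (simp add: le_divide_eq)
    then show ?thesis unfolding D_def[symmetric] sig .
  qed
  have trRs: "Re (mtrace Rs) = Re (mtrace Rb) + (\<Sum>k\<in>UNIV. Re (mtrace (Wb k))) - (\<Sum>k\<in>UNIV. (norm (ws k))\<^sup>2)"
    unfolding Rs_def by (simp add: mtrace_add mtrace_diff mtrace_sum Re_trace_outer)
  have pow: "(\<Sum>k\<in>UNIV. (norm (ws k))\<^sup>2) + Re (mtrace Rs) \<le> P0"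
    using F unfolding feasS_def trRs by simp
  have Rs_alt: "Rs = Rb + (\<Sum>k\<in>UNIV. Wb k - outer (ws k) (ws k))"
    unfolding Rs_def by (simp add: sum_subtractf algebra_simps)
  have psdRs: "psd Rs"
    unfolding Rs_alt
  proof (rule psd_add[OF psdR], rule psd_sum)
    fix k :: 'k
    show "psd (Wb k - outer (ws k) (ws k))"
      unfolding ws_def using psd_Wminus[OF psdW bpos[unfolded b_def]] .
  qed
  have hRs: "hermitian Rs"
    unfolding Rs_def by (intro herm_diff herm_add hR herm_sum hW herm_outer)
  have "feasP h Gam sigma2 P0 ws Rs"
    unfolding feasP_def using sinr pow psdRs hRs by blast
  moreover have "objP G ws Rs = objS G Wb Rb"
    unfolding objP_def objS_def Rs_def by (simp add: algebra_simps)
  ultimately show ?thesis by blast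
qed


theorem proposition2:
  fixes G :: "complex ^'m ^'n"
    and h :: "'k::finite \<Rightarrow> complex ^'m"
    and Gam sigma2 :: "'k \<Rightarrow> real"
    and P0 :: real
  assumes "P0 > 0" and "\<And>k. Gam k > 0" and "\<And>k. sigma2 k > 0"
  shows "(INF p \<in> {(w, R0). feasP h Gam sigma2 P0 w R0}. objP G (fst p) (snd p))
           = (INF p \<in> {(W, R0). feasS h Gam sigma2 P0 W R0}. objS G (fst p) (snd p))
         \<and> (\<forall>Wb Rb. feasS h Gam sigma2 P0 Wb Rb \<longrightarrow>
             objS G Wb Rb = (INF p \<in> {(W, R0). feasS h Gam sigma2 P0 W R0}. objS G (fst p) (snd p)) \<longrightarrow>
             (let ws = (\<lambda>k. complex_of_real (1 / sqrt (Re (cinner (h k) (Wb k *v h k)))) *s (Wb k *v h k));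
                  Rs = Rb + (\<Sum>k\<in>UNIV. Wb k) - (\<Sum>k\<in>UNIV. outer (ws k) (ws k))
              in feasP h Gam sigma2 P0 ws Rs \<and>
                 objP G ws Rs = (INF p \<in> {(w, R0). feasP h Gam sigma2 P0 w R0}. objP G (fst p) (snd p))))"
proof -
  let ?IP = "(INF p \<in> {(w, R0). feasP h Gam sigma2 P0 w R0}. objP G (fst p) (snd p))"
  let ?IS = "(INF p \<in> {(W, R0). feasS h Gam sigma2 P0 W R0}. objS G (fst p) (snd p))"
  have c: "feasP h Gam sigma2 P0 (\<lambda>k. complex_of_real (1 / sqrt (Re (cinner (h k) (Wb k *v h k)))) *s (Wb k *v h k))
             (Rb + (\<Sum>k\<in>UNIV. Wb k) - (\<Sum>k\<in>UNIV. outer ((\<lambda>k. complex_of_real (1 / sqrt (Re (cinner (h k) (Wb k *v h k)))) *s (Wb k *v h k)) k) ((\<lambda>k. complex_of_real (1 / sqrt (Re (cinner (h k) (Wb k *v h k)))) *s (Wb k *v h k)) k)))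
         \<and> objP G (\<lambda>k. complex_of_real (1 / sqrt (Re (cinner (h k) (Wb k *v h k)))) *s (Wb k *v h k))
             (Rb + (\<Sum>k\<in>UNIV. Wb k) - (\<Sum>k\<in>UNIV. outer ((\<lambda>k. complex_of_real (1 / sqrt (Re (cinner (h k) (Wb k *v h k)))) *s (Wb k *v h k)) k) ((\<lambda>k. complex_of_real (1 / sqrt (Re (cinner (h k) (Wb k *v h k)))) *s (Wb k *v h k)) k)))
           = objS G Wb Rb"
    if "feasS h Gam sigma2 P0 Wb Rb" for Wb Rb
    by (rule construct[OF assms(2,3) that refl refl])
  have le1: "?IS \<le> ?IP"
  proof (rule INF_greatest)
    fix p assume "p \<in> {(w, R0). feasP h Gam sigma2 P0 w R0}"
    then obtain w R0 where p: "p = (w, R0)" and F: "feasP h Gam sigma2 P0 w R0" by auto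
    have E: "feasS h Gam sigma2 P0 (\<lambda>k. outer (w k) (w k)) R0
         \<and> objS G (\<lambda>k. outer (w k) (w k)) R0 = objP G w R0"
      by (rule embed[OF assms(2,3) F])
    have "?IS \<le> objS G (fst ((\<lambda>k. outer (w k) (w k)), R0)) (snd ((\<lambda>k. outer (w k) (w k)), R0))"
      by (rule INF_lower) (use E in simp)
    then show "?IS \<le> objP G (fst p) (snd p)" using E p by simp
  qed
  have le2: "?IP \<le> ?IS"
  proof (rule INF_greatest)
    fix p assume "p \<in> {(W, R0). feasS h Gam sigma2 P0 W R0}"
    then obtain W R0 where p: "p = (W, R0)" and F: "feasS h Gam sigma2 P0 W R0" by auto
    note E = c[OF F]
    show "?IP \<le> objS G (fst p) (snd p)"
      unfolding p fst_conv snd_conv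
      by (rule order_trans[OF INF_lower], rule CollectI, rule case_prodI, rule conjunct1[OF E])
         (simp only: fst_conv snd_conv conjunct2[OF E] order_refl)
  qed
  have eq: "?IP = ?IS" using le1 le2 by (rule antisym[rotated])
  show ?thesis
  proof (intro conjI allI impI)
    show "?IP = ?IS" by (rule eq)
  next
    fix Wb Rb assume F: "feasS h Gam sigma2 P0 Wb Rb" and opt: "objS G Wb Rb = ?IS"
    show "let ws = (\<lambda>k. complex_of_real (1 / sqrt (Re (cinner (h k) (Wb k *v h k)))) *s (Wb k *v h k));
                  Rs = Rb + (\<Sum>k\<in>UNIV. Wb k) - (\<Sum>k\<in>UNIV. outer (ws k) (ws k))
              in feasP h Gam sigma2 P0 ws Rs \<and> objP G ws Rs = ?IP"
      unfolding Let_def using c[OF F] opt eq by simp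
  qed
qed

end
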